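(* Let $A\in\mathbb R^{d\times d}$, $r>0$, and let $\mathbf x(t)$ be a solution (with initial function in $C([-r,0],\Delta_d)$) of one of the delayed replicator equations $$\dot{\mathbf x}(t)=\mathbf x(t)\cdot\big(A\mathbf x(t-r)-\mathbf x(t)^{\top}A\mathbf x(t-r)\big)$$ or $$\dot{\mathbf x}(t)=\mathbf x(t)\cdot\big(A\bar{\mathbf x}(t)-\mathbf x(t)^{\top}A\bar{\mathbf x}(t)\big),\qquad \bar{\mathbf x}(t)=\int_{-r}^0\mathbf x(t+s)\,d\mu(s),$$ where $\mu$ is a probability measure on $[-r,0]$ and $\cdot$ denotes the componentwise product. Then: (a) If the replicator ODE $\dot{\mathbf x}=\mathbf x\cdot(A\mathbf x-\mathbf x^\top A\mathbf x)$ has no interior equilibrium, then $\mathbf x(t)$ approaches the boundary of the simplex $\Delta_d$ asymptotically. (b) If the replicator ODE has a unique interior equilibrium $\mathbf p$, then $p_i=\lim_{T\to\infty}\frac1T\int_0^T x_i(t)\,dt$ for all $i$, provided the solution $\mathbf x(t)$ lies in the interior of $\Delta_d$ and remains bounded away from the boundary of $\Delta_d$.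
   Context: $\Delta_d=\{\mathbf x\in\mathbb R_+^d:\sum_i x_i=1\}$. An interior equilibrium of the replicator ODE is a point $\mathbf p$ in the interior of $\Delta_d$ with $(A\mathbf p)_i=(A\mathbf p)_j$ for all $i,j$. *)

theory Defs
  imports "HOL-Probability.Probability"
begin

definition prob_simplex :: "(real^'d) set" where
  "prob_simplex = {x. (\<forall>i. 0 \<le> x $ i) \<and> (\<Sum>i\<in>UNIV. x $ i) = 1}"

definition simplex_interior :: "(real^'d) set" where
  "simplex_interior = {x. (\<forall>i. 0 < x $ i) \<and> (\<Sum>i\<in>UNIV. x $ i) = 1}"

definition simplex_boundary :: "(real^'d) set" where
  "simplex_boundary = {x \<in> prob_simplex. \<exists>i. x $ i = 0}"

definition interior_equilibrium :: "real^'d^'d \<Rightarrow> real^'d \<Rightarrow> bool" where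
  "interior_equilibrium A p \<longleftrightarrow> p \<in> simplex_interior \<and> (\<forall>i j. (A *v p) $ i = (A *v p) $ j)"

definition rep_field :: "real^'d^'d \<Rightarrow> real^'d \<Rightarrow> real^'d \<Rightarrow> real^'d" where
  "rep_field A x y = (\<chi> i. x $ i * ((A *v y) $ i - x \<bullet> (A *v y)))"

definition delayed_replicator_solution :: "real^'d^'d \<Rightarrow> real \<Rightarrow> (real \<Rightarrow> real^'d) \<Rightarrow> bool" where
  "delayed_replicator_solution A r x \<longleftrightarrow>
     continuous_on {-r..} x \<and> (\<forall>t\<in>{-r..0}. x t \<in> prob_simplex) \<and>
     (\<forall>t\<ge>0. (x has_vector_derivative rep_field A (x t) (x (t - r))) (at t within {0..}))"

definition distributed_replicator_solution ::
  "real^'d^'d \<Rightarrow> real \<Rightarrow> real measure \<Rightarrow> (real \<Rightarrow> real^'d) \<Rightarrow> bool" where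
  "distributed_replicator_solution A r \<mu> x \<longleftrightarrow>
     prob_space \<mu> \<and> sets \<mu> = sets borel \<and> measure \<mu> {-r..0} = 1 \<and>
     continuous_on {-r..} x \<and> (\<forall>t\<in>{-r..0}. x t \<in> prob_simplex) \<and>
     (\<forall>t\<ge>0. (x has_vector_derivative
        rep_field A (x t) (integral\<^sup>L \<mu> (\<lambda>s. indicator {-r..0} s *\<^sub>R x (t + s))))
        (at t within {0..}))"

end

theory Submission
  imports Defs
begin

lemma fubini_delay:
  fixes g :: "real \<Rightarrow> real" and \<mu> :: "real measure"
  assumes P: "prob_space \<mu>" and S: "sets \<mu> = sets borel" and g: "continuous_on {-r..} g"
    and ab: "0 \<le> a" "a \<le> b" and r: "0 \<le> r"
  shows "(\<lambda>s. \<integral>u. indicator {-r..0} u * g (s+u) \<partial>\<mu>) integrable_on {a..b}"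
    "integral {a..b} (\<lambda>s. \<integral>u. indicator {-r..0} u * g (s+u) \<partial>\<mu>)
       = (\<integral>u. indicator {-r..0} u * integral {a+u..b+u} g \<partial>\<mu>)"
    "integrable \<mu> (\<lambda>u. indicator {-r..0} u * integral {a+u..b+u} g)"
proof -
  interpret prob_space \<mu> by fact
  interpret pair_sigma_finite lborel \<mu>
    unfolding pair_sigma_finite_def
    using lborel.sigma_finite_measure_axioms prob_space_imp_sigma_finite[OF P] by blast
  define g' where "g' v = g (max v (-r))" for v
  have cg': "continuous_on UNIV g'"
    unfolding g'_def
    by (rule continuous_on_compose2[OF g]) (auto intro!: continuous_intros)
  have g'eq: "g' v = g v" if "v \<ge> -r" for v using that by (simp add: g'_def)
  have mg': "g' \<in> borel_measurable borel" by (rule borel_measurable_continuous_onI[OF cg'])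
  obtain C where C: "\<And>v. v \<in> {a-r..b} \<Longrightarrow> \<bar>g v\<bar> \<le> C"
  proof -
    have "compact (g ` {a-r..b})"
      using ab by (intro compact_continuous_image continuous_on_subset[OF g]) auto
    then obtain C where "\<forall>y\<in>g ` {a-r..b}. norm y \<le> C" using compact_imp_bounded bounded_iff by metis
    then have "\<And>v. v \<in> {a-r..b} \<Longrightarrow> \<bar>g v\<bar> \<le> C" by force
    then show ?thesis using that by blast
  qed
  define F where "F = (\<lambda>p::real\<times>real. indicator ({a..b} \<times> {-r..0}) p * g' (fst p + snd p))"
  have idm: "(\<lambda>u::real. u) \<in> borel_measurable \<mu>" using S by (simp add: measurable_ident_sets)
  have msnd: "(\<lambda>p::real\<times>real. snd p) \<in> borel_measurable (lborel \<Otimes>\<^sub>M \<mu>)"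
    by (rule measurable_compose[OF measurable_snd idm])
  have mfst: "(\<lambda>p::real\<times>real. fst p) \<in> borel_measurable (lborel \<Otimes>\<^sub>M \<mu>)"
    by (rule measurable_compose[OF measurable_fst]) simp
  have setin: "{a..b} \<times> {-r..0} \<in> sets (lborel \<Otimes>\<^sub>M \<mu>)"
    by (rule pair_measureI) (auto simp: S)
  have mF: "F \<in> borel_measurable (lborel \<Otimes>\<^sub>M \<mu>)"
    unfolding F_def
    apply (intro borel_measurable_times borel_measurable_indicator setin)
    apply (rule measurable_compose[OF _ mg'])
    using borel_measurable_add[OF mfst msnd] by simp
  note emeasure_pair_measure_Times' = sigma_finite_measure.emeasure_pair_measure_Times[OF prob_space_imp_sigma_finite[OF P], where A="{a..b}" and N=lborel and B="{-r..0}"]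
  have emb: "emeasure (lborel \<Otimes>\<^sub>M \<mu>) ({a..b} \<times> {-r..0}) < \<infinity>"
  proof -
    have "emeasure \<mu> {-r..0} < \<top>" by (simp add: less_top[symmetric])
    then show ?thesis using ab emeasure_pair_measure_Times' S
      by (simp add: ennreal_mult_less_top emeasure_lborel_Icc)
  qed
  have iF: "integrable (lborel \<Otimes>\<^sub>M \<mu>) F"
  proof (rule Bochner_Integration.integrable_bound[OF _ mF])
    show "integrable (lborel \<Otimes>\<^sub>M \<mu>) (\<lambda>p. C * indicator ({a..b} \<times> {-r..0}) p)"
      using setin emb by (intro integrable_mult_right integrable_real_indicator)
    show "AE p in lborel \<Otimes>\<^sub>M \<mu>. norm (F p) \<le> norm (C * indicator ({a..b} \<times> {-r..0}) p)"
    proof (rule AE_I2)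
      fix p :: "real \<times> real"
      obtain s u where p: "p = (s,u)" by fastforce
      show "norm (F p) \<le> norm (C * indicator ({a..b} \<times> {-r..0}) p)"
      proof (cases "s \<in> {a..b} \<and> u \<in> {-r..0}")
        case True
        then have "g' (s+u) = g (s+u)" using ab by (intro g'eq) auto
        moreover have "\<bar>g (s+u)\<bar> \<le> C" using True by (intro C) auto
        ultimately show ?thesis using True by (simp add: F_def p indicator_def)
      next
        case False then show ?thesis by (auto simp: F_def p indicator_def)
      qed
    qed
  qed
  have iF': "integrable (lborel \<Otimes>\<^sub>M \<mu>) (\<lambda>(s,u). F (s,u))" using iF by simp
  define h where "h s = (\<integral>u. indicator {-r..0} u * g (s+u) \<partial>\<mu>)" for s
  have inner1: "(\<integral>u. F (s,u) \<partial>\<mu>) = indicator {a..b} s * h s" for s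
  proof (cases "s \<in> {a..b}")
    case True
    have "(\<integral>u. F (s,u) \<partial>\<mu>) = (\<integral>u. indicator {-r..0} u * g (s+u) \<partial>\<mu>)"
    proof (rule Bochner_Integration.integral_cong[OF refl])
      fix u show "F (s,u) = indicator {-r..0} u * g (s+u)"
        using True ab by (auto simp: F_def indicator_def g'eq)
    qed
    then show ?thesis using True by (simp add: h_def)
  next
    case False
    then have "\<And>u. F (s,u) = 0" by (auto simp: F_def indicator_def)
    then show ?thesis using False by simp
  qed
  have inner2: "(\<integral>s. F (s,u) \<partial>lborel) = indicator {-r..0} u * integral {a+u..b+u} g" for u
  proof (cases "u \<in> {-r..0}")
    case True
    have "(\<integral>s. F (s,u) \<partial>lborel) = (\<integral>s. indicator {a..b} s *\<^sub>R g' (s+u) \<partial>lborel)"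
      using True by (intro Bochner_Integration.integral_cong) (auto simp: F_def indicator_def)
    also have "\<dots> = integral {a..b} (\<lambda>s. g' (s+u))"
    proof -
      have "set_integrable lborel {a..b} (\<lambda>s. g' (s+u))"
        unfolding set_integrable_def
        by (rule borel_integrable_compact) (auto intro!: continuous_on_compose2[OF cg'] continuous_intros)
      from set_borel_integral_eq_integral(2)[OF this] show ?thesis
        by (simp add: set_lebesgue_integral_def)
    qed
    also have "\<dots> = integral {a+u..b+u} g'"
      using integral_shift_Icc_real[of a b g' u] by (simp add: o_def add.commute)
    also have "\<dots> = integral {a+u..b+u} g"
      using True ab by (intro integral_cong g'eq) auto
    finally show ?thesis using True by simp
  next
    case False
    then have "\<And>s. F (s,u) = 0" by (auto simp: F_def indicator_def)
    then show ?thesis using False by simp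
  qed
  have i1: "integrable lborel (\<lambda>s. indicator {a..b} s * h s)"
    using integrable_fst'[OF iF] inner1 by simp
  then have si: "set_integrable lborel {a..b} h" by (simp add: set_integrable_def)
  show "h integrable_on {a..b}" using set_borel_integral_eq_integral(1)[OF si] .
  show "integrable \<mu> (\<lambda>u. indicator {-r..0} u * integral {a+u..b+u} g)"
    using integrable_snd[OF iF'] inner2 by simp
  have "integral {a..b} h = (\<integral>s. indicator {a..b} s * h s \<partial>lborel)"
    using set_borel_integral_eq_integral(2)[OF si] by (simp add: set_lebesgue_integral_def)
  also have "\<dots> = (\<integral>s. \<integral>u. F (s,u) \<partial>\<mu> \<partial>lborel)" by (simp add: inner1)
  also have "\<dots> = (\<integral>u. \<integral>s. F (s,u) \<partial>lborel \<partial>\<mu>)"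
    using Fubini_integral[OF iF'] by simp
  also have "\<dots> = (\<integral>u. indicator {-r..0} u * integral {a+u..b+u} g \<partial>\<mu>)" by (simp add: inner2)
  finally show "integral {a..b} h = (\<integral>u. indicator {-r..0} u * integral {a+u..b+u} g \<partial>\<mu>)" .
qed


lemma ode_uniq:
  fixes u g :: "real \<Rightarrow> real"
  assumes ab: "a \<le> b"
    and d: "\<And>t. t \<in> {a..b} \<Longrightarrow> (u has_real_derivative u t * g t) (at t within {a..b})"
    and M: "\<And>t. t \<in> {a..b} \<Longrightarrow> \<bar>g t\<bar> \<le> M"
  shows "u a = 0 \<Longrightarrow> u b = 0" and "u b = 0 \<Longrightarrow> u a = 0"
proof -
  define v where "v = (\<lambda>t. u t ^ 2 * exp (- 2 * M * t))"
  define w where "w = (\<lambda>t. u t ^ 2 * exp (2 * M * t))"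
  have dv: "(v has_real_derivative (2 * g t - 2 * M) * v t) (at t within {a..b})" if "t \<in> {a..b}" for t
  proof -
    have d1: "((\<lambda>t. u t ^ 2) has_real_derivative of_nat 2 * ((u t * g t) * u t ^ (2 - Suc 0))) (at t within {a..b})"
      by (rule DERIV_power[OF d[OF that]])
    have d2: "((\<lambda>t. exp (- 2 * M * t)) has_real_derivative exp (- 2 * M * t) * (- 2 * M * 1)) (at t within {a..b})"
      by (rule DERIV_exp[THEN DERIV_chain2], rule DERIV_cmult, rule DERIV_ident)
    show ?thesis unfolding v_def w_def
      by (rule DERIV_cong[OF DERIV_mult[OF d1 d2]]) (simp add: algebra_simps power2_eq_square)
  qed
  have dw: "(w has_real_derivative (2 * g t + 2 * M) * w t) (at t within {a..b})" if "t \<in> {a..b}" for t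
  proof -
    have d1: "((\<lambda>t. u t ^ 2) has_real_derivative of_nat 2 * ((u t * g t) * u t ^ (2 - Suc 0))) (at t within {a..b})"
      by (rule DERIV_power[OF d[OF that]])
    have d2: "((\<lambda>t. exp (2 * M * t)) has_real_derivative exp (2 * M * t) * (2 * M * 1)) (at t within {a..b})"
      by (rule DERIV_exp[THEN DERIV_chain2], rule DERIV_cmult, rule DERIV_ident)
    show ?thesis unfolding v_def w_def
      by (rule DERIV_cong[OF DERIV_mult[OF d1 d2]]) (simp add: algebra_simps power2_eq_square)
  qed
  have hv: "((\<lambda>t. (2 * g t - 2 * M) * v t) has_integral v b - v a) {a..b}"
    using fundamental_theorem_of_calculus[OF ab, of v] dv
    by (simp add: has_real_derivative_iff_has_vector_derivative)
  have hv2: "\<And>t. t \<in> {a..b} \<Longrightarrow> (2 * g t - 2 * M) * v t \<le> 0"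
  proof -
    fix t assume t: "t \<in> {a..b}"
    have "g t \<le> M" using M[OF t] by simp
    moreover have "v t \<ge> 0" by (simp add: v_def)
    ultimately show "(2 * g t - 2 * M) * v t \<le> 0" by (simp add: mult_nonpos_nonneg)
  qed
  have vle: "v b - v a \<le> 0"
    using has_integral_nonneg[OF has_integral_neg[OF hv]] hv2 by force
  have hw: "((\<lambda>t. (2 * g t + 2 * M) * w t) has_integral w b - w a) {a..b}"
    using fundamental_theorem_of_calculus[OF ab, of w] dw
    by (simp add: has_real_derivative_iff_has_vector_derivative)
  have hw2: "\<And>t. t \<in> {a..b} \<Longrightarrow> (2 * g t + 2 * M) * w t \<ge> 0"
  proof -
    fix t assume t: "t \<in> {a..b}"
    have "- g t \<le> M" using M[OF t] by simp
    moreover have "w t \<ge> 0" by (simp add: w_def)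
    ultimately show "(2 * g t + 2 * M) * w t \<ge> 0" by simp
  qed
  have wle: "w b - w a \<ge> 0"
    using has_integral_nonneg[OF hw] hw2 by blast
  show "u b = 0" if "u a = 0"
  proof -
    have "v b \<le> 0" using vle that by (simp add: v_def)
    then have "(u b)\<^sup>2 \<le> 0" by (simp add: v_def mult_le_0_iff)
    then show ?thesis by simp
  qed
  show "u a = 0" if "u b = 0"
  proof -
    have "w a \<le> 0" using wle that by (simp add: w_def)
    then have "(u a)\<^sup>2 \<le> 0" by (simp add: w_def mult_le_0_iff)
    then show ?thesis by simp
  qed
qed

lemma ftc_mono:
  fixes f f' :: "real \<Rightarrow> real"
  assumes ab: "a \<le> b"
    and d: "\<And>t. t \<in> {a..b} \<Longrightarrow> (f has_real_derivative f' t) (at t within {a..b})"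
    and nn: "\<And>t. t \<in> {a..b} \<Longrightarrow> f' t \<ge> 0"
  shows "f a \<le> f b"
proof -
  have "(f' has_integral f b - f a) {a..b}"
    using fundamental_theorem_of_calculus[OF ab, of f] d
    by (simp add: has_real_derivative_iff_has_vector_derivative)
  from has_integral_nonneg[OF this] show ?thesis using nn by force
qed


definition Yv :: "real measure \<Rightarrow> real \<Rightarrow> (real \<Rightarrow> real^'d) \<Rightarrow> real \<Rightarrow> real^'d" where
  "Yv \<mu> r x t = integral\<^sup>L \<mu> (\<lambda>s. indicator {-r..0} s *\<^sub>R x (t + s))"

context
  fixes A :: "real^'d^'d" and r :: real and \<mu> :: "real measure" and x :: "real \<Rightarrow> real^'d"
  assumes r: "r > 0" and sol: "distributed_replicator_solution A r \<mu> x"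
begin

lemma P: "prob_space \<mu>" and S: "sets \<mu> = sets borel" and m1: "measure \<mu> {-r..0} = 1"
  and cx: "continuous_on {-r..} x" and init: "\<And>t. t \<in> {-r..0} \<Longrightarrow> x t \<in> prob_simplex"
  and dx: "\<And>t. t \<ge> 0 \<Longrightarrow> (x has_vector_derivative rep_field A (x t) (Yv \<mu> r x t)) (at t within {0..})"
  using sol unfolding distributed_replicator_solution_def Yv_def by auto

lemma bnd_x: obtains B where "B \<ge> 0" "\<And>v. v \<in> {-r..T} \<Longrightarrow> norm (x v) \<le> B"
proof -
  have "compact (x ` {-r..T})"
    by (intro compact_continuous_image continuous_on_subset[OF cx]) auto
  then obtain B where "\<forall>y\<in>x ` {-r..T}. norm y \<le> B" using compact_imp_bounded bounded_iff by metis
  then have "\<And>v. v \<in> {-r..T} \<Longrightarrow> norm (x v) \<le> max B 0" by force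
  then show ?thesis using that[of "max B 0"] by simp
qed

lemma meas_Y: "t \<ge> 0 \<Longrightarrow> (\<lambda>s. indicator {-r..0} s *\<^sub>R x (t+s)) \<in> borel_measurable \<mu>"
proof -
  assume t: "t \<ge> 0"
  have "continuous_on {-r..0} (\<lambda>s. x (t+s))"
    using t by (intro continuous_on_compose2[OF cx]) (auto intro!: continuous_intros)
  then have "(\<lambda>s. indicator {-r..0} s *\<^sub>R x (t+s)) \<in> borel_measurable borel"
    by (intro borel_measurable_continuous_on_indicator) auto
  then show ?thesis using measurable_cong_sets[OF S refl] by blast
qed

lemma int_Y: "t \<ge> 0 \<Longrightarrow> integrable \<mu> (\<lambda>s. indicator {-r..0} s *\<^sub>R x (t+s))"
proof -
  assume t: "t \<ge> 0"
  obtain B where B: "B \<ge> 0" "\<And>v. v \<in> {-r..t} \<Longrightarrow> norm (x v) \<le> B" using bnd_x by blast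
  interpret prob_space \<mu> by (rule P)
  show ?thesis
  proof (rule integrable_const_bound[OF _ meas_Y[OF t]])
    show "AE s in \<mu>. norm (indicator {-r..0} s *\<^sub>R x (t+s)) \<le> B"
    proof (rule AE_I2)
      fix s show "norm (indicator {-r..0} s *\<^sub>R x (t+s)) \<le> B"
        using B t by (auto simp: indicator_def)
    qed
  qed
qed

lemma inner_Y: "t \<ge> 0 \<Longrightarrow> w \<bullet> Yv \<mu> r x t = (\<integral>s. indicator {-r..0} s * (w \<bullet> x (t+s)) \<partial>\<mu>)"
  unfolding Yv_def
  using integral_bounded_linear[OF bounded_linear_inner_right int_Y, of t w]
  by simp

lemma norm_Y: "t \<ge> 0 \<Longrightarrow> 0 \<le> B \<Longrightarrow> (\<And>v. v \<in> {t-r..t} \<Longrightarrow> norm (x v) \<le> B) \<Longrightarrow> norm (Yv \<mu> r x t) \<le> B"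
proof -
  assume t: "t \<ge> 0" and B: "0 \<le> B" and xb: "\<And>v. v \<in> {t-r..t} \<Longrightarrow> norm (x v) \<le> B"
  interpret prob_space \<mu> by (rule P)
  have "norm (Yv \<mu> r x t) \<le> (\<integral>s. norm (indicator {-r..0} s *\<^sub>R x (t+s)) \<partial>\<mu>)"
    unfolding Yv_def by (rule integral_norm_bound)
  also have "\<dots> \<le> B"
  proof (rule integral_le_const)
    show "integrable \<mu> (\<lambda>s. norm (indicator {-r..0} s *\<^sub>R x (t+s)))"
      using int_Y[OF t] by (rule integrable_norm)
    show "AE s in \<mu>. norm (indicator {-r..0} s *\<^sub>R x (t+s)) \<le> B"
    proof (rule AE_I2)
      fix s show "norm (indicator {-r..0} s *\<^sub>R x (t+s)) \<le> B"
        using B xb[of "t+s"] by (auto simp: indicator_def)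
    qed
  qed
  finally show ?thesis .
qed

abbreviation "G t \<equiv> A *v Yv \<mu> r x t"

lemma rep_comp: "rep_field A (x t) (Yv \<mu> r x t) $ i = x t $ i * (G t $ i - x t \<bullet> G t)"
  by (simp add: rep_field_def)

lemma comp_deriv: "t \<ge> 0 \<Longrightarrow>
  ((\<lambda>t. x t $ i) has_real_derivative x t $ i * (G t $ i - x t \<bullet> G t)) (at t within {0..})"
  using bounded_linear.has_vector_derivative[OF bounded_linear_vec_nth dx, of t i]
  by (simp add: has_real_derivative_iff_has_vector_derivative rep_comp)

lemma g_bound: obtains M where "\<And>t i. t \<in> {0..T} \<Longrightarrow> \<bar>G t $ i - x t \<bullet> G t\<bar> \<le> M \<and> \<bar>x t \<bullet> G t\<bar> \<le> M"
proof -
  obtain B where B: "B \<ge> 0" "\<And>v. v \<in> {-r..T} \<Longrightarrow> norm (x v) \<le> B" using bnd_x by blast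
  obtain K where K: "K > 0" "\<And>y. norm (A *v y) \<le> norm y * K"
    using bounded_linear.pos_bounded[OF matrix_vector_mul_bounded_linear[of A]] by blast
  have "\<bar>G t $ i - x t \<bullet> G t\<bar> \<le> B * K + B * (B * K) \<and> \<bar>x t \<bullet> G t\<bar> \<le> B * K + B * (B * K)"
    if t: "t \<in> {0..T}" for t i
  proof -
    have nY: "norm (Yv \<mu> r x t) \<le> B" using t r by (intro norm_Y B) auto
    have nG: "norm (G t) \<le> B * K"
      using K(2)[of "Yv \<mu> r x t"] nY K(1) by (meson mult_right_mono order_trans less_imp_le)
    have nx: "norm (x t) \<le> B" using t r by (intro B) auto
    have c1: "\<bar>G t $ i\<bar> \<le> B * K" using component_le_norm_cart[of "G t" i] nG by linarith
    have c2: "\<bar>x t \<bullet> G t\<bar> \<le> B * (B * K)"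
      using Cauchy_Schwarz_ineq2[of "x t" "G t"] nx nG B(1)
      by (meson mult_mono norm_ge_zero order_trans)
    have "0 \<le> B * K" using B(1) K(1) by simp
    then show ?thesis using c1 c2 by (simp add: abs_le_iff)
  qed
  then show ?thesis using that by blast
qed

lemma sum_inv: "T \<ge> 0 \<Longrightarrow> (\<Sum>i\<in>UNIV. x T $ i) = 1"
proof -
  assume T: "T \<ge> 0"
  obtain M where M: "\<And>t i. t \<in> {0..T} \<Longrightarrow> \<bar>G t $ i - x t \<bullet> G t\<bar> \<le> M \<and> \<bar>x t \<bullet> G t\<bar> \<le> M"
    using g_bound by blast
  define u where "u t = 1 - (\<Sum>i\<in>UNIV. x t $ i)" for t
  have du: "(u has_real_derivative u t * (- (x t \<bullet> G t))) (at t within {0..T})" if t: "t \<in> {0..T}" for t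
  proof -
    have "(u has_real_derivative 0 - (\<Sum>i\<in>UNIV. x t $ i * (G t $ i - x t \<bullet> G t))) (at t within {0..})"
      unfolding u_def using t
      by (intro DERIV_diff DERIV_const DERIV_sum comp_deriv) auto
    moreover have "0 - (\<Sum>i\<in>UNIV. x t $ i * (G t $ i - x t \<bullet> G t)) = u t * (- (x t \<bullet> G t))"
      by (simp add: u_def algebra_simps sum_subtractf sum_distrib_right inner_vec_def)
    ultimately show ?thesis by (metis DERIV_subset atLeastAtMost_iff atLeast_iff subsetI)
  qed
  have "u 0 = 0" using init[of 0] r by (simp add: u_def prob_simplex_def)
  then have "u T = 0"
    using ode_uniq(1)[OF T du, of M] M by (simp add: abs_minus_cancel)
  then show ?thesis by (simp add: u_def)
qed

lemma comp_uniq: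
  assumes T: "T \<ge> 0"
  shows "x 0 $ i = 0 \<Longrightarrow> x T $ i = 0" and "x T $ i = 0 \<Longrightarrow> x 0 $ i = 0"
proof -
  obtain M where M: "\<And>t i. t \<in> {0..T} \<Longrightarrow> \<bar>G t $ i - x t \<bullet> G t\<bar> \<le> M \<and> \<bar>x t \<bullet> G t\<bar> \<le> M"
    using g_bound by blast
  have du: "((\<lambda>t. x t $ i) has_real_derivative x t $ i * (G t $ i - x t \<bullet> G t)) (at t within {0..T})"
    if t: "t \<in> {0..T}" for t
    using comp_deriv[of t i] t by (auto intro: DERIV_subset)
  show "x 0 $ i = 0 \<Longrightarrow> x T $ i = 0" using ode_uniq(1)[OF T du, of M] M by blast
  show "x T $ i = 0 \<Longrightarrow> x 0 $ i = 0" using ode_uniq(2)[OF T du, of M] M by blast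
qed

lemma comp_pos: "T \<ge> 0 \<Longrightarrow> x 0 $ i > 0 \<Longrightarrow> x T $ i > 0"
proof (rule ccontr)
  assume T: "T \<ge> 0" and p: "x 0 $ i > 0" and n: "\<not> x T $ i > 0"
  have "continuous_on {0..T} (\<lambda>t. x t $ i)"
    using r by (intro continuous_on_component continuous_on_subset[OF cx]) auto
  then obtain t0 where t0: "0 \<le> t0" "t0 \<le> T" "x t0 $ i = 0"
    using IVT2'[of "\<lambda>t. x t $ i" T 0 0] n p T by force
  then have "x 0 $ i = 0" using comp_uniq(2)[of t0 i] by simp
  then show False using p by simp
qed

lemma comp_nonneg: "T \<ge> -r \<Longrightarrow> x T $ i \<ge> 0"
proof (cases "T \<ge> 0")
  case True
  have "x 0 $ i \<ge> 0" using init[of 0] r by (simp add: prob_simplex_def)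
  then show ?thesis using comp_pos[OF True, of i] comp_uniq(1)[OF True, of i]
    by (cases "x 0 $ i = 0") auto
next
  case False
  assume "T \<ge> -r"
  then show ?thesis using init[of T] False by (simp add: prob_simplex_def)
qed

lemma x_simplex: "T \<ge> -r \<Longrightarrow> x T \<in> prob_simplex"
proof (cases "T \<ge> 0")
  case True
  then show ?thesis using sum_inv comp_nonneg r by (simp add: prob_simplex_def)
next
  case False
  assume "T \<ge> -r"
  then show ?thesis using init[of T] False by simp
qed

end

lemma transp_inner: "(transpose A *v c) \<bullet> z = c \<bullet> (A *v (z::real^'n))"
  for A :: "real^'n^'n"
  by (simp add: transpose_matrix_vector dot_lmul_matrix)

lemma sep:
  fixes A :: "real^'d^'d"
  assumes noeq: "\<not> (\<exists>p. interior_equilibrium A p)"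
  obtains c a :: "real^'d" where "(\<Sum>i\<in>UNIV. c $ i) = 0" "\<And>z. c \<bullet> (A *v z) = a \<bullet> z"
    "\<And>i. a $ i \<ge> 0" "a \<noteq> 0"
proof -
  define Ker where "Ker = {z::real^'d. \<forall>i j. (A *v z) $ i = (A *v z) $ j}"
  define Pos where "Pos = {z::real^'d. \<forall>i. z $ i > 0}"
  have Ascale: "(A *v (t *\<^sub>R z)) $ i = t * (A *v z) $ i" for t z i
    by (simp add: matrix_vector_mult_scaleR)
  have Aadd: "(A *v (z + w)) $ i = (A *v z) $ i + (A *v w) $ i" for z w i
    by (simp add: matrix_vector_right_distrib)
  have disj: "Ker \<inter> Pos = {}"
  proof (rule ccontr)
    assume "Ker \<inter> Pos \<noteq> {}"
    then obtain z where zK: "z \<in> Ker" and zO: "z \<in> Pos" by blast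
    define s where "s = (\<Sum>i\<in>UNIV. z $ i)"
    have s: "s > 0" unfolding s_def using zO by (intro sum_pos) (auto simp: Pos_def)
    define p where "p = (1/s) *\<^sub>R z"
    have "interior_equilibrium A p"
      unfolding interior_equilibrium_def simplex_interior_def
    proof (intro conjI allI CollectI)
      show "0 < p $ i" for i using zO s by (simp add: p_def Pos_def)
      show "(\<Sum>i\<in>UNIV. p $ i) = 1" using s by (simp add: p_def sum_divide_distrib[symmetric] s_def[symmetric])
      show "(A *v p) $ i = (A *v p) $ j" for i j using zK by (simp add: p_def Ascale Ker_def)
    qed
    then show False using noeq by blast
  qed
  have cK: "convex Ker"
    unfolding convex_def Ker_def by (simp add: Aadd Ascale) metis
  have cO: "convex Pos"
    unfolding convex_def Pos_def
  proof (intro ballI allI impI CollectI)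
    fix z w :: "real^'d" and u v :: real and i
    assume z: "z \<in> {z. \<forall>i. 0 < z $ i}" and w: "w \<in> {z. \<forall>i. 0 < z $ i}" and uv: "0 \<le> u" "0 \<le> v" "u + v = 1"
    have "u * z $ i \<ge> 0" "v * w $ i \<ge> 0" using z w uv by (simp_all add: less_imp_le)
    moreover have "u * z $ i > 0 \<or> v * w $ i > 0" using z w uv
      by (cases "u = 0") auto
    ultimately show "0 < (u *\<^sub>R z + v *\<^sub>R w) $ i" by auto
  qed
  have 0: "0 \<in> Ker" by (simp add: Ker_def)
  have 1: "(\<chi> i. 1) \<in> Pos" by (simp add: Pos_def)
  obtain a b where a0: "a \<noteq> 0" and aK: "\<forall>z\<in>Ker. a \<bullet> z \<le> b" and aO: "\<forall>z\<in>Pos. b \<le> a \<bullet> z"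
    using separating_hyperplane_sets[OF cK cO _ _ disj] 0 1 by blast
  have perp: "a \<bullet> z = 0" if z: "z \<in> Ker" for z
  proof (rule ccontr)
    assume nz: "a \<bullet> z \<noteq> 0"
    define t where "t = (\<bar>b\<bar> + 1) / (a \<bullet> z)"
    have "t *\<^sub>R z \<in> Ker" using z by (simp add: Ker_def Ascale)
    then have "a \<bullet> (t *\<^sub>R z) \<le> b" using aK by blast
    moreover have "a \<bullet> (t *\<^sub>R z) = \<bar>b\<bar> + 1" using nz by (simp add: t_def)
    ultimately show False by linarith
  qed
  have b0: "b \<ge> 0" using aK 0 by force
  have apos: "a $ i \<ge> 0" for i
  proof (rule ccontr)
    assume neg: "\<not> a $ i \<ge> 0"
    define t where "t = (\<bar>a \<bullet> (\<chi> j. 1)\<bar> + 1) / (- a $ i)"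
    have t: "t > 0" using neg unfolding t_def by (intro divide_pos_pos) auto
    have "(\<chi> j. 1) + t *\<^sub>R axis i 1 \<in> Pos" using t by (simp add: Pos_def axis_def)
    then have "b \<le> a \<bullet> ((\<chi> j. 1) + t *\<^sub>R axis i 1)" using aO by blast
    moreover have "a \<bullet> ((\<chi> j. 1) + t *\<^sub>R axis i 1) = a \<bullet> (\<chi> j. 1) + t * a $ i"
      by (simp add: inner_add_right inner_axis)
    moreover have "t * a $ i = - (\<bar>a \<bullet> (\<chi> j. 1)\<bar> + 1)" using neg by (simp add: t_def)
    ultimately show False using b0 by linarith
  qed
  define V where "V = {transpose A *v c | c::real^'d. (\<Sum>i\<in>UNIV. c $ i) = 0}"
  have subV: "subspace V"
    unfolding subspace_def V_def
  proof (intro conjI ballI allI)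
    show "0 \<in> {transpose A *v c |c. (\<Sum>i\<in>UNIV. c $ i) = 0}"
      by (rule CollectI, rule exI[of _ 0]) simp
    fix v w assume v: "v \<in> {transpose A *v c |c. (\<Sum>i\<in>UNIV. c $ i) = 0}"
      and w: "w \<in> {transpose A *v c |c. (\<Sum>i\<in>UNIV. c $ i) = 0}"
    from v obtain c1 where c1: "v = transpose A *v c1" "(\<Sum>i\<in>UNIV. c1 $ i) = 0" by blast
    from w obtain c2 where c2: "w = transpose A *v c2" "(\<Sum>i\<in>UNIV. c2 $ i) = 0" by blast
    show "v + w \<in> {transpose A *v c |c. (\<Sum>i\<in>UNIV. c $ i) = 0}"
      using c1 c2 by (intro CollectI exI[of _ "c1 + c2"]) (simp add: matrix_vector_right_distrib sum.distrib)
  next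
    fix t :: real and v assume v: "v \<in> {transpose A *v c |c. (\<Sum>i\<in>UNIV. c $ i) = 0}"
    from v obtain c1 where c1: "v = transpose A *v c1" "(\<Sum>i\<in>UNIV. c1 $ i) = 0" by blast
    show "t *\<^sub>R v \<in> {transpose A *v c |c. (\<Sum>i\<in>UNIV. c $ i) = 0}"
      using c1 by (intro CollectI exI[of _ "t *\<^sub>R c1"]) (simp add: matrix_vector_mult_scaleR sum_distrib_left[symmetric])
  qed
  obtain y w where y: "y \<in> span V" and w: "\<And>v. v \<in> span V \<Longrightarrow> orthogonal w v" and ayw: "a = y + w"
    using orthogonal_subspace_decomp_exists[of V a] by metis
  have "w \<in> Ker"
    unfolding Ker_def
  proof (intro CollectI allI)
    fix i j :: 'd
    define c where "c = axis i (1::real) - axis j 1"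
    have "(\<Sum>k\<in>UNIV. c $ k) = 0" by (simp add: c_def axis_def sum_subtractf)
    then have "transpose A *v c \<in> span V" using span_superset[of V] by (auto simp: V_def)
    then have "w \<bullet> (transpose A *v c) = 0" using w by (simp add: orthogonal_def)
    then have "c \<bullet> (A *v w) = 0" by (metis transp_inner inner_commute)
    then show "(A *v w) $ i = (A *v w) $ j"
      by (simp add: c_def inner_diff_left inner_commute[of "axis _ _"] inner_axis)
  qed
  then have aw: "a \<bullet> w = 0" using perp by blast
  have yw: "y \<bullet> w = 0" using w[OF y] by (simp add: orthogonal_def inner_commute)
  have "w \<bullet> w = 0" using aw yw ayw by (simp add: inner_add_left)
  then have "w = 0" by simp
  have "span V = V" using subV by (metis span_eq_iff real_vector.span_eq_iff)
  then have "a \<in> V" using ayw y \<open>w = 0\<close> by (metis add.right_neutral)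
  then obtain c where c: "a = transpose A *v c" "(\<Sum>i\<in>UNIV. c $ i) = 0" by (auto simp: V_def)
  show ?thesis
  proof (rule that[of c a])
    show "(\<Sum>i\<in>UNIV. c $ i) = 0" by (rule c(2))
    show "c \<bullet> (A *v z) = a \<bullet> z" for z by (simp add: c(1) dot_lmul_matrix)
    show "0 \<le> a $ i" for i by (rule apos)
    show "a \<noteq> 0" by (rule a0)
  qed
qed


lemma norm_simplex: "z \<in> prob_simplex \<Longrightarrow> norm z \<le> 1"
proof -
  assume z: "z \<in> prob_simplex"
  have "norm z \<le> (\<Sum>i\<in>UNIV. \<bar>z $ i\<bar>)" by (rule norm_le_l1_cart)
  also have "\<dots> = (\<Sum>i\<in>UNIV. z $ i)" using z by (simp add: prob_simplex_def)
  also have "\<dots> = 1" using z by (simp add: prob_simplex_def)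
  finally show ?thesis .
qed

lemma comp_le1: "z \<in> prob_simplex \<Longrightarrow> z $ i \<le> 1"
proof -
  assume z: "z \<in> prob_simplex"
  have "z $ i \<le> (\<Sum>k\<in>UNIV. z $ k)"
    using z by (intro member_le_sum) (auto simp: prob_simplex_def)
  then show ?thesis using z by (simp add: prob_simplex_def)
qed

lemma simplex_lb:
  assumes z: "z \<in> prob_simplex" and d: "0 < \<delta>" and inf: "\<delta> \<le> infdist z simplex_boundary"
  shows "\<delta> / 2 \<le> z $ i"
proof (rule ccontr)
  assume small: "\<not> \<delta> / 2 \<le> z $ i"
  show False
  proof (cases "\<exists>j. j \<noteq> i")
    case False
    then have U: "UNIV = {i}" by blast
    have "simplex_boundary = ({} :: (real^'a) set)"
    proof (rule ccontr)
      assume "simplex_boundary \<noteq> ({} :: (real^'a) set)"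
      then obtain v :: "real^'a" where v: "v \<in> simplex_boundary" by blast
      then obtain k where "v $ k = 0" by (auto simp: simplex_boundary_def)
      moreover have "(\<Sum>k\<in>UNIV. v $ k) = 1" using v by (simp add: simplex_boundary_def prob_simplex_def)
      moreover have "k = i" using U by blast
      moreover have "(\<Sum>k\<in>UNIV. v $ k) = v $ i" unfolding U by simp
      ultimately show False by simp
    qed
    then have "infdist z simplex_boundary = 0" by (simp add: infdist_def)
    then show False using d inf by simp
  next
    case True
    then obtain j where ji: "j \<noteq> i" by blast
    define w where "w = z + z $ i *\<^sub>R (axis j 1 - axis i 1)"
    have wk: "w $ k = z $ k + z $ i * ((if k = j then 1 else 0) - (if k = i then 1 else 0))" for k
      by (simp add: w_def axis_def)
    have zi: "z $ i \<ge> 0" using z by (simp add: prob_simplex_def)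
    have "w \<in> simplex_boundary"
      unfolding simplex_boundary_def prob_simplex_def
    proof (intro CollectI conjI allI exI)
      show "0 \<le> w $ k" for k using z zi ji by (auto simp: wk prob_simplex_def)
      show "w $ i = 0" using ji by (simp add: wk)
      have "(\<Sum>k\<in>UNIV. w $ k) = (\<Sum>k\<in>UNIV. z $ k) + z $ i * ((\<Sum>k\<in>UNIV. if k = j then 1 else 0) - (\<Sum>k\<in>UNIV. if k = i then 1 else 0))"
        by (simp add: wk sum.distrib sum_distrib_left[symmetric] sum_subtractf algebra_simps)
      also have "\<dots> = 1" using z by (simp add: prob_simplex_def)
      finally show "(\<Sum>k\<in>UNIV. w $ k) = 1" .
    qed
    then have "infdist z simplex_boundary \<le> dist z w" by (rule infdist_le)
    also have "\<dots> = norm (z $ i *\<^sub>R (axis j (1::real) - axis i 1))" by (simp add: w_def dist_norm)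
    also have "\<dots> = z $ i * norm (axis j (1::real) - axis i 1)" using zi by simp
    also have "\<dots> \<le> z $ i * 2"
    proof (rule mult_left_mono[OF _ zi])
      have "norm (axis j (1::real) - axis i 1) \<le> norm (axis j (1::real)) + norm (axis i (1::real))"
        by (rule norm_triangle_ineq4)
      then show "norm (axis j (1::real) - axis i 1) \<le> 2" by simp
    qed
    finally show False using inf small by linarith
  qed
qed


context
  fixes A :: "real^'d^'d" and r :: real and \<mu> :: "real measure" and x :: "real \<Rightarrow> real^'d"
  assumes r: "r > 0" and sol: "distributed_replicator_solution A r \<mu> x"
begin
lemma cont_g: "continuous_on {-r..} (\<lambda>v. w \<bullet> x v)"
  using cx[OF r sol] by (intro continuous_intros)

lemma ln_deriv: "t \<ge> 0 \<Longrightarrow> x t $ i > 0 \<Longrightarrow>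
  ((\<lambda>t. ln (x t $ i)) has_real_derivative (G A r \<mu> x t $ i - x t \<bullet> G A r \<mu> x t)) (at t within {0..})"
proof -
  assume t: "t \<ge> 0" and p: "x t $ i > 0"
  have "((\<lambda>t. ln (x t $ i)) has_real_derivative 1 / x t $ i * (x t $ i * (G A r \<mu> x t $ i - x t \<bullet> G A r \<mu> x t))) (at t within {0..})"
    by (rule DERIV_chain2[OF DERIV_ln_divide[OF p] comp_deriv[OF r sol t]])
  then show ?thesis by (rule DERIV_cong) (use p in \<open>simp add: field_simps\<close>)
qed

lemma fub_inner:
  assumes ab: "0 \<le> a" "a \<le> b"
  shows "((\<lambda>s. w \<bullet> Yv \<mu> r x s) has_integral (\<integral>u. indicator {-r..0} u * integral {a+u..b+u} (\<lambda>v. w \<bullet> x v) \<partial>\<mu>)) {a..b}"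
    and "integrable \<mu> (\<lambda>u. indicator {-r..0} u * integral {a+u..b+u} (\<lambda>v. w \<bullet> x v))"
proof -
  note fd = fubini_delay[where g="\<lambda>v. w \<bullet> x v", OF P[OF r sol] S[OF r sol] cont_g ab less_imp_le[OF r]]
  have h: "((\<lambda>s. \<integral>u. indicator {-r..0} u * (w \<bullet> x (s+u)) \<partial>\<mu>) has_integral
      integral {a..b} (\<lambda>s. \<integral>u. indicator {-r..0} u * (w \<bullet> x (s+u)) \<partial>\<mu>)) {a..b}"
    by (rule integrable_integral[OF fd(1)])
  have eq: "\<And>s. s \<in> {a..b} \<Longrightarrow> (\<integral>u. indicator {-r..0} u * (w \<bullet> x (s+u)) \<partial>\<mu>) = w \<bullet> Yv \<mu> r x s"
  proof -
    fix s assume "s \<in> {a..b}"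
    then have "s \<ge> 0" using ab by auto
    then show "(\<integral>u. indicator {-r..0} u * (w \<bullet> x (s+u)) \<partial>\<mu>) = w \<bullet> Yv \<mu> r x s"
      by (rule inner_Y[OF r sol, symmetric])
  qed
  from has_integral_eq[OF eq h] show "((\<lambda>s. w \<bullet> Yv \<mu> r x s) has_integral (\<integral>u. indicator {-r..0} u * integral {a+u..b+u} (\<lambda>v. w \<bullet> x v) \<partial>\<mu>)) {a..b}"
    unfolding fd(2) .
  show "integrable \<mu> (\<lambda>u. indicator {-r..0} u * integral {a+u..b+u} (\<lambda>v. w \<bullet> x v))"
    by (rule fd(3))
qed

lemma int_g: "-r \<le> a \<Longrightarrow> (\<lambda>v. w \<bullet> x v) integrable_on {a..b}"
  by (rule integrable_continuous_real, rule continuous_on_subset[OF cont_g]) auto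

lemma g_bound1: "v \<ge> -r \<Longrightarrow> norm (w \<bullet> x v) \<le> norm w"
proof -
  assume v: "v \<ge> -r"
  have "norm (x v) \<le> 1" using x_simplex[OF r sol v] by (rule norm_simplex)
  then show ?thesis using Cauchy_Schwarz_ineq2[of w "x v"]
    by (simp add: order_trans mult_left_le)
qed

lemma shift_bound:
  assumes T: "T \<ge> 0" and u: "u \<in> {-r..0}"
  shows "\<bar>integral {u..T+u} (\<lambda>v. w \<bullet> x v) - integral {0..T} (\<lambda>v. w \<bullet> x v)\<bar> \<le> 2 * r * norm w"
proof -
  define g where "g = (\<lambda>v. w \<bullet> x v)"
  define \<Phi> where "\<Phi> t = integral {-r..t} g" for t
  have comb: "integral {a..b} g = \<Phi> b - \<Phi> a" if "-r \<le> a" "a \<le> b" for a b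
    using Henstock_Kurzweil_Integration.integral_combine[where a="-r" and c=a and b=b and f=g] that int_g[where a="-r" and b=b and w=w] by (simp add: \<Phi>_def g_def)
  have bnd: "\<bar>integral {a..b} g\<bar> \<le> norm w * (b - a)" if "-r \<le> a" "a \<le> b" for a b
  proof -
    have "norm (integral {a..b} g) \<le> norm w * (b - a)"
      unfolding g_def
    proof (rule integral_bound)
      show "continuous_on {a..b} (\<lambda>v. w \<bullet> x v)" using that by (intro continuous_on_subset[OF cont_g]) auto
      show "norm (w \<bullet> x t) \<le> norm w" if "t \<in> {a..b}" for t
        using that \<open>-r \<le> a\<close> by (intro g_bound1) auto
    qed (use that in auto)
    then show ?thesis by simp
  qed
  have "integral {u..T+u} g - integral {0..T} g = (\<Phi> (T+u) - \<Phi> u) - (\<Phi> T - \<Phi> 0)"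
    using comb[of u "T+u"] comb[of 0 T] u T r by auto
  also have "\<dots> = - integral {T+u..T} g + integral {u..0} g"
    using comb[of "T+u" T] comb[of u 0] u T by auto
  finally have eq: "integral {u..T+u} g - integral {0..T} g = - integral {T+u..T} g + integral {u..0} g" .
  have "\<bar>integral {T+u..T} g\<bar> \<le> norm w * r" using bnd[of "T+u" T] u T r
    by (smt (verit, best) atLeastAtMost_iff mult_left_mono norm_ge_zero)
  moreover have "\<bar>integral {u..0} g\<bar> \<le> norm w * r" using bnd[of u 0] u
    by (smt (verit, best) atLeastAtMost_iff mult_left_mono norm_ge_zero)
  moreover have "2 * r * norm w = norm w * r + norm w * r" by simp
  ultimately show ?thesis unfolding g_def[symmetric] using eq by linarith
qed

lemma avg_bound:
  assumes T: "T \<ge> 0"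
  shows "\<bar>(\<integral>u. indicator {-r..0} u * integral {u..T+u} (\<lambda>v. w \<bullet> x v) \<partial>\<mu>) - integral {0..T} (\<lambda>v. w \<bullet> x v)\<bar> \<le> 2 * r * norm w"
proof -
  interpret prob_space \<mu> by (rule P[OF r sol])
  define I0 where "I0 = integral {0..T} (\<lambda>v. w \<bullet> x v)"
  define J where "J u = integral {u..T+u} (\<lambda>v. w \<bullet> x v)" for u
  have iJ: "integrable \<mu> (\<lambda>u. indicator {-r..0} u * J u)"
    using fub_inner(2)[where a=0 and b=T and w=w] T by (simp add: J_def)
  have sets: "{-r..0} \<in> sets \<mu>" using S[OF r sol] by simp
  have iI: "integrable \<mu> (\<lambda>u. indicator {-r..0} u * I0)"
    using sets by (intro integrable_mult_left integrable_real_indicator) (auto simp: emeasure_finite less_top[symmetric])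
  have eqI0: "(\<integral>u. indicator {-r..0} u * I0 \<partial>\<mu>) = I0"
    using m1[OF r sol] sets_eq_imp_space_eq[OF S[OF r sol]] by simp
  have "(\<integral>u. indicator {-r..0} u * J u \<partial>\<mu>) - I0 = (\<integral>u. indicator {-r..0} u * J u - indicator {-r..0} u * I0 \<partial>\<mu>)"
    using Bochner_Integration.integral_diff[OF iJ iI] eqI0 by simp
  moreover have "\<bar>\<integral>u. indicator {-r..0} u * J u - indicator {-r..0} u * I0 \<partial>\<mu>\<bar> \<le> 2 * r * norm w"
  proof -
    have pt: "\<bar>indicator {-r..0} u * J u - indicator {-r..0} u * I0\<bar> \<le> 2 * r * norm w" for u
    proof (cases "u \<in> {-r..0}")
      case True then show ?thesis using shift_bound[OF T True, of w] by (simp add: J_def I0_def)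
    next
      case False then show ?thesis using r by simp
    qed
    have iD: "integrable \<mu> (\<lambda>u. indicator {-r..0} u * J u - indicator {-r..0} u * I0)"
      using iJ iI by simp
    have "(\<integral>u. indicator {-r..0} u * J u - indicator {-r..0} u * I0 \<partial>\<mu>) \<le> 2 * r * norm w"
      using pt by (intro integral_le_const[OF iD] AE_I2) (simp add: abs_le_iff)
    moreover have "- (2 * r * norm w) \<le> (\<integral>u. indicator {-r..0} u * J u - indicator {-r..0} u * I0 \<partial>\<mu>)"
      using pt by (intro integral_ge_const[OF iD] AE_I2) (smt (verit))
    ultimately show ?thesis by linarith
  qed
  ultimately show ?thesis by (simp add: J_def I0_def)
qed

lemma int_inner: "T \<ge> 0 \<Longrightarrow> integral {0..T} (\<lambda>v. w \<bullet> x v) = w \<bullet> (\<chi> k. integral {0..T} (\<lambda>t. x t $ k))"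
proof -
  assume T: "T \<ge> 0"
  have ik: "(\<lambda>t. x t $ k) integrable_on {0..T}" for k
    using r by (intro integrable_continuous_real continuous_on_component continuous_on_subset[OF cx[OF r sol]]) auto
  have "integral {0..T} (\<lambda>v. w \<bullet> x v) = integral {0..T} (\<lambda>v. \<Sum>k\<in>UNIV. w $ k * x v $ k)"
    by (simp add: inner_vec_def)
  also have "\<dots> = (\<Sum>k\<in>UNIV. integral {0..T} (\<lambda>v. w $ k * x v $ k))"
    using integrable_on_cmult_left[OF ik, where c="w $ _"] by (intro integral_sum) auto
  also have "\<dots> = (\<Sum>k\<in>UNIV. w $ k * integral {0..T} (\<lambda>v. x v $ k))"
    by (simp add: integral_mult_right)
  also have "\<dots> = w \<bullet> (\<chi> k. integral {0..T} (\<lambda>t. x t $ k))"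
    by (simp add: inner_vec_def)
  finally show ?thesis .
qed


end

context
  fixes A :: "real^'d^'d" and r :: real and \<mu> :: "real measure" and x :: "real \<Rightarrow> real^'d"
  assumes r: "r > 0" and sol: "distributed_replicator_solution A r \<mu> x"
begin

lemma part_b:
  assumes peq: "interior_equilibrium A p" and uniq: "\<forall>q. interior_equilibrium A q \<longrightarrow> q = p"
    and int: "\<forall>t\<ge>0. x t \<in> simplex_interior" and d: "\<delta> > 0"
    and dl: "\<forall>t\<ge>0. \<delta> \<le> infdist (x t) simplex_boundary"
  shows "((\<lambda>T. integral {0..T} (\<lambda>t. x t $ i) / T) \<longlongrightarrow> p $ i) at_top"
proof -
  define \<eta> where "\<eta> = \<delta> / 2"
  have \<eta>: "\<eta> > 0" using d by (simp add: \<eta>_def)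
  have lb: "\<eta> \<le> x t $ k" if "t \<ge> 0" for t k
    unfolding \<eta>_def using that r dl by (intro simplex_lb[OF x_simplex[OF r sol] d]) auto
  have ub: "x t $ k \<le> 1" if "t \<ge> -r" for t k
    using that by (intro comp_le1 x_simplex[OF r sol])
  have lnb: "\<bar>ln (x t $ k)\<bar> \<le> \<bar>ln \<eta>\<bar>" if "t \<ge> 0" for t k
  proof -
    have a: "\<eta> \<le> x t $ k" using lb[OF that] .
    have b: "x t $ k \<le> 1" using ub[of t k] that r by simp
    have "ln (x t $ k) \<le> 0" using a b \<eta> by simp
    moreover have "ln \<eta> \<le> ln (x t $ k)" using a \<eta> by simp
    moreover have "ln \<eta> \<le> 0" using a b \<eta> by simp
    ultimately show ?thesis by linarith
  qed
  define X where "X T = (\<chi> k. integral {0..T} (\<lambda>t. x t $ k))" for T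
  define W where "W i j = A $ i - A $ j" for i j
  define C where "C i j = 4 * \<bar>ln \<eta>\<bar> + 2 * r * norm (W i j)" for i j
  have bnd: "\<bar>W i j \<bullet> X T\<bar> \<le> C i j" if T: "T \<ge> 0" for i j T
  proof -
    define Lf where "Lf t = ln (x t $ i) - ln (x t $ j)" for t
    have dL: "(Lf has_vector_derivative (W i j \<bullet> Yv \<mu> r x t)) (at t within {0..T})" if t: "t \<in> {0..T}" for t
    proof -
      have t0: "t \<ge> 0" using t by simp
      have pi: "x t $ i > 0" using lb[OF t0, of i] \<eta> by simp
      have pj: "x t $ j > 0" using lb[OF t0, of j] \<eta> by simp
      have "(Lf has_real_derivative (((A *v Yv \<mu> r x t) $ i - x t \<bullet> (A *v Yv \<mu> r x t)) - ((A *v Yv \<mu> r x t) $ j - x t \<bullet> (A *v Yv \<mu> r x t)))) (at t within {0..})"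
        unfolding Lf_def by (intro DERIV_diff ln_deriv[OF r sol t0 pi] ln_deriv[OF r sol t0 pj])
      moreover have "((A *v Yv \<mu> r x t) $ i - x t \<bullet> (A *v Yv \<mu> r x t)) - ((A *v Yv \<mu> r x t) $ j - x t \<bullet> (A *v Yv \<mu> r x t)) = W i j \<bullet> Yv \<mu> r x t"
        by (simp add: W_def matrix_vector_mul_component inner_diff_left)
      ultimately have "(Lf has_real_derivative W i j \<bullet> Yv \<mu> r x t) (at t within {0..})" by simp
      then have "(Lf has_real_derivative W i j \<bullet> Yv \<mu> r x t) (at t within {0..T})"
        by (rule DERIV_subset) auto
      then show ?thesis by (simp add: has_real_derivative_iff_has_vector_derivative)
    qed
    have h1: "((\<lambda>t. W i j \<bullet> Yv \<mu> r x t) has_integral Lf T - Lf 0) {0..T}"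
      by (rule fundamental_theorem_of_calculus[OF T dL])
    have h2: "((\<lambda>t. W i j \<bullet> Yv \<mu> r x t) has_integral (\<integral>u. indicator {-r..0} u * integral {u..T+u} (\<lambda>v. W i j \<bullet> x v) \<partial>\<mu>)) {0..T}"
      using fub_inner(1)[OF r sol, where a=0 and b=T and w="W i j"] T by simp
    have eq: "Lf T - Lf 0 = (\<integral>u. indicator {-r..0} u * integral {u..T+u} (\<lambda>v. W i j \<bullet> x v) \<partial>\<mu>)"
      using has_integral_unique[OF h1 h2] .
    have L4: "\<bar>Lf T - Lf 0\<bar> \<le> 4 * \<bar>ln \<eta>\<bar>"
      using lnb[OF T, of i] lnb[OF T, of j] lnb[of 0 i] lnb[of 0 j] unfolding Lf_def by (smt (verit))
    have av: "\<bar>(\<integral>u. indicator {-r..0} u * integral {u..T+u} (\<lambda>v. W i j \<bullet> x v) \<partial>\<mu>) - integral {0..T} (\<lambda>v. W i j \<bullet> x v)\<bar> \<le> 2 * r * norm (W i j)"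
      by (rule avg_bound[OF r sol T])
    have "integral {0..T} (\<lambda>v. W i j \<bullet> x v) = W i j \<bullet> X T"
      unfolding X_def by (rule int_inner[OF r sol T])
    then show ?thesis using eq L4 av unfolding C_def by linarith
  qed
  define \<xi> where "\<xi> T = (\<chi> k. integral {0..T} (\<lambda>t. x t $ k) / T)" for T
  have \<xi>X: "\<xi> T = (1 / T) *\<^sub>R X T" for T
    by (simp add: \<xi>_def X_def vec_eq_iff)
  have W\<xi>: "((\<lambda>T. W i j \<bullet> \<xi> T) \<longlongrightarrow> 0) at_top" for i j
  proof (rule Lim_null_comparison)
    show "\<forall>\<^sub>F T in at_top. norm (W i j \<bullet> \<xi> T) \<le> C i j * inverse T"
      using eventually_gt_at_top[of 0]
    proof eventually_elim
      case (elim T)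
      have "norm (W i j \<bullet> \<xi> T) = \<bar>W i j \<bullet> X T\<bar> / T" using elim by (simp add: \<xi>X)
      also have "\<dots> \<le> C i j / T" using bnd[of T i j] elim by (simp add: divide_right_mono)
      finally show ?case by (simp add: divide_inverse)
    qed
    show "((\<lambda>T. C i j * inverse T) \<longlongrightarrow> 0) at_top"
      using tendsto_mult[OF tendsto_const tendsto_inverse_0_at_top[OF filterlim_ident], of "C i j"] by simp
  qed
  define F where "F z = (\<Sum>i\<in>UNIV. \<Sum>j\<in>UNIV. \<bar>W i j \<bullet> z\<bar>)" for z
  have F\<xi>: "((\<lambda>T. F (\<xi> T)) \<longlongrightarrow> 0) at_top"
  proof -
    have "((\<lambda>T. \<Sum>i\<in>UNIV. \<Sum>j\<in>UNIV. \<bar>W i j \<bullet> \<xi> T\<bar>) \<longlongrightarrow> (\<Sum>i\<in>(UNIV::'d set). \<Sum>j\<in>(UNIV::'d set). 0)) at_top"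
      by (intro tendsto_sum tendsto_rabs_zero W\<xi>)
    then show ?thesis by (simp add: F_def)
  qed
  have cF: "continuous_on UNIV F" unfolding F_def by (intro continuous_intros)
  define K where "K = {z::real^'d. (\<forall>k. \<eta> \<le> z $ k) \<and> (\<Sum>k\<in>UNIV. z $ k) = 1}"
  have ik: "(\<lambda>t. x t $ k) integrable_on {0..T}" for k T
    using r by (intro integrable_continuous_real continuous_on_component continuous_on_subset[OF cx[OF r sol]]) auto
  have \<xi>K: "\<xi> T \<in> K" if T: "T > 0" for T
    unfolding K_def
  proof (intro CollectI conjI allI)
    fix k
    have "integral {0..T} (\<lambda>t. \<eta>) \<le> integral {0..T} (\<lambda>t. x t $ k)"
      using lb T by (intro integral_le ik) auto
    then have "\<eta> * T \<le> integral {0..T} (\<lambda>t. x t $ k)" using T by (simp add: mult.commute)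
    then show "\<eta> \<le> \<xi> T $ k" using T by (simp add: \<xi>_def pos_le_divide_eq)
  next
    have "(\<Sum>k\<in>UNIV. integral {0..T} (\<lambda>t. x t $ k)) = integral {0..T} (\<lambda>t. \<Sum>k\<in>UNIV. x t $ k)"
      by (rule integral_sum[symmetric]) (auto intro: ik)
    also have "\<dots> = integral {0..T} (\<lambda>t. 1)"
      by (rule integral_cong) (use sum_inv[OF r sol] in auto)
    also have "\<dots> = T" using T by simp
    finally show "(\<Sum>k\<in>UNIV. \<xi> T $ k) = 1" using T by (simp add: \<xi>_def sum_divide_distrib[symmetric])
  qed
  have clK: "closed K"
    unfolding K_def by (intro closed_Collect_conj closed_Collect_all closed_Collect_le closed_Collect_eq continuous_intros)
  have bK: "bounded K"
  proof -
    have "norm z \<le> 1" if "z \<in> K" for z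
      using that \<eta> by (intro norm_simplex) (auto simp: K_def prob_simplex_def intro: order_trans[OF less_imp_le[OF \<eta>]])
    then show ?thesis by (auto simp: bounded_iff)
  qed
  have lim: "(\<xi> \<longlongrightarrow> p) at_top"
  proof (rule tendstoI)
    fix \<epsilon> :: real assume e: "\<epsilon> > 0"
    define Ke where "Ke = K \<inter> {z. \<epsilon> \<le> dist z p}"
    have cKe: "compact Ke" unfolding Ke_def
      using clK bK by (intro compact_Int_closed) (auto simp: compact_eq_bounded_closed intro!: closed_Collect_le continuous_intros)
    show "\<forall>\<^sub>F T in at_top. dist (\<xi> T) p < \<epsilon>"
    proof (cases "Ke = {}")
      case True
      show ?thesis using eventually_gt_at_top[of 0]
      proof eventually_elim
        case (elim T)
        then show ?case using \<xi>K[OF elim] True by (auto simp: Ke_def not_le)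
      qed
    next
      case False
      obtain z0 where z0: "z0 \<in> Ke" and zmin: "\<And>y. y \<in> Ke \<Longrightarrow> F z0 \<le> F y"
        using continuous_attains_inf[OF cKe False continuous_on_subset[OF cF]] by blast
      have Fpos: "F z0 > 0"
      proof (rule ccontr)
        assume "\<not> F z0 > 0"
        moreover have "F z0 \<ge> 0" by (simp add: F_def sum_nonneg)
        ultimately have "F z0 = 0" by simp
        then have "\<forall>i j. \<bar>W i j \<bullet> z0\<bar> = 0"
          unfolding F_def by (simp add: sum_nonneg_eq_0_iff sum_nonneg)
        then have eqs: "\<forall>i j. (A *v z0) $ i = (A *v z0) $ j"
          by (simp add: W_def matrix_vector_mul_component inner_diff_left)
        have "z0 \<in> simplex_interior"
          using z0 \<eta> by (auto simp: Ke_def K_def simplex_interior_def intro: less_le_trans)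
        then have "interior_equilibrium A z0" using eqs by (simp add: interior_equilibrium_def)
        then have "z0 = p" using uniq by blast
        then show False using z0 e by (simp add: Ke_def)
      qed
      have ev: "\<forall>\<^sub>F T in at_top. F (\<xi> T) < F z0"
        using order_tendstoD(2)[OF F\<xi> Fpos] .
      show ?thesis using ev eventually_gt_at_top[of 0]
      proof eventually_elim
        case (elim T)
        show ?case
        proof (rule ccontr)
          assume "\<not> dist (\<xi> T) p < \<epsilon>"
          then have "\<xi> T \<in> Ke" using \<xi>K[of T] elim by (auto simp: Ke_def)
          then show False using zmin elim by fastforce
        qed
      qed
    qed
  qed
  have "((\<lambda>T. \<xi> T $ i) \<longlongrightarrow> p $ i) at_top" by (rule tendsto_vec_nth[OF lim])
  then show ?thesis by (simp add: \<xi>_def)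
qed

end

context
  fixes A :: "real^'d^'d" and r :: real and \<mu> :: "real measure" and x :: "real \<Rightarrow> real^'d"
  assumes r: "r > 0" and sol: "distributed_replicator_solution A r \<mu> x"
begin

lemma ax_nn: "(\<And>k. a $ k \<ge> 0) \<Longrightarrow> v \<ge> -r \<Longrightarrow> a \<bullet> x v \<ge> 0"
  unfolding inner_vec_def using comp_nonneg[OF r sol]
  by (intro sum_nonneg) simp

lemma Vdiff:
  assumes ab: "0 \<le> \<alpha>" "\<alpha> \<le> \<beta>"
    and dV: "\<And>t. t \<ge> 0 \<Longrightarrow> (V has_real_derivative a \<bullet> Yv \<mu> r x t) (at t within {0..})"
  shows "V \<beta> - V \<alpha> = (\<integral>u. indicator {-r..0} u * integral {\<alpha>+u..\<beta>+u} (\<lambda>v. a \<bullet> x v) \<partial>\<mu>)"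
proof -
  have d: "(V has_vector_derivative a \<bullet> Yv \<mu> r x t) (at t within {\<alpha>..\<beta>})" if "t \<in> {\<alpha>..\<beta>}" for t
  proof -
    have "(V has_real_derivative a \<bullet> Yv \<mu> r x t) (at t within {\<alpha>..\<beta>})"
      using that ab by (intro DERIV_subset[OF dV]) auto
    then show ?thesis by (simp add: has_real_derivative_iff_has_vector_derivative)
  qed
  have h1: "((\<lambda>t. a \<bullet> Yv \<mu> r x t) has_integral V \<beta> - V \<alpha>) {\<alpha>..\<beta>}"
    by (rule fundamental_theorem_of_calculus[OF ab(2) d])
  show ?thesis using has_integral_unique[OF h1 fub_inner(1)[OF r sol ab, of a]] .
qed

lemma part_a:
  assumes noeq: "\<not> (\<exists>p. interior_equilibrium A p)"
  shows "((\<lambda>t. infdist (x t) simplex_boundary) \<longlongrightarrow> 0) at_top"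
proof -
  interpret prob_space \<mu> by (rule P[OF r sol])
  obtain c a :: "real^'d" where c0: "(\<Sum>i\<in>UNIV. c $ i) = 0" and ca: "\<And>z. c \<bullet> (A *v z) = a \<bullet> z"
    and a0: "\<And>i. a $ i \<ge> 0" and an: "a \<noteq> 0"
    using sep[OF noeq] by blast
  show ?thesis
  proof (cases "\<exists>i. x 0 $ i = 0")
    case True
    then obtain i where i: "x 0 $ i = 0" by blast
    have "infdist (x t) simplex_boundary = 0" if t: "t \<ge> 0" for t
    proof -
      have "x t $ i = 0" using comp_uniq(1)[OF r sol t i] .
      moreover have "x t \<in> prob_simplex" using t r by (intro x_simplex[OF r sol]) simp
      ultimately have "x t \<in> simplex_boundary" by (auto simp: simplex_boundary_def)
      then show ?thesis by (rule infdist_zero)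
    qed
    then show ?thesis
      by (intro tendsto_eventually) (use eventually_ge_at_top[of 0] in \<open>rule eventually_mono\<close>)
  next
    case False
    have pos: "x t $ i > 0" if "t \<ge> 0" for t i
    proof -
      have "x 0 $ i \<ge> 0" using comp_nonneg[OF r sol, of 0 i] r by simp
      then have "x 0 $ i > 0" using False by (simp add: less_le)
      then show ?thesis by (rule comp_pos[OF r sol that])
    qed
    define V where "V t = (\<Sum>i\<in>UNIV. c $ i * ln (x t $ i))" for t
    have dV: "(V has_real_derivative a \<bullet> Yv \<mu> r x t) (at t within {0..})" if t: "t \<ge> 0" for t
    proof -
      have "(V has_real_derivative (\<Sum>i\<in>UNIV. c $ i * ((A *v Yv \<mu> r x t) $ i - x t \<bullet> (A *v Yv \<mu> r x t)))) (at t within {0..})"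
        unfolding V_def by (intro DERIV_sum DERIV_cmult ln_deriv[OF r sol t] pos[OF t])
      moreover have "(\<Sum>i\<in>UNIV. c $ i * ((A *v Yv \<mu> r x t) $ i - x t \<bullet> (A *v Yv \<mu> r x t))) = a \<bullet> Yv \<mu> r x t"
      proof -
        have "(\<Sum>i\<in>UNIV. c $ i * ((A *v Yv \<mu> r x t) $ i - x t \<bullet> (A *v Yv \<mu> r x t)))
           = (\<Sum>i\<in>UNIV. c $ i * (A *v Yv \<mu> r x t) $ i) - (\<Sum>i\<in>UNIV. c $ i) * (x t \<bullet> (A *v Yv \<mu> r x t))"
          by (simp add: algebra_simps sum_subtractf sum_distrib_right)
        also have "\<dots> = c \<bullet> (A *v Yv \<mu> r x t)" using c0 by (simp add: inner_vec_def)
        finally show ?thesis using ca by simp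
      qed
      ultimately show ?thesis by simp
    qed
    have axnn: "v \<ge> -r \<Longrightarrow> a \<bullet> x v \<ge> 0" for v using ax_nn a0 by blast
    have Vmono: "V \<alpha> \<le> V \<beta>" if ab: "0 \<le> \<alpha>" "\<alpha> \<le> \<beta>" for \<alpha> \<beta>
    proof -
      have "0 \<le> (\<integral>u. indicator {-r..0} u * integral {\<alpha>+u..\<beta>+u} (\<lambda>v. a \<bullet> x v) \<partial>\<mu>)"
      proof (rule Bochner_Integration.integral_nonneg)
        fix u
        show "0 \<le> indicator {-r..0} u * integral {\<alpha>+u..\<beta>+u} (\<lambda>v. a \<bullet> x v)"
        proof (cases "u \<in> {-r..0}")
          case True
          have "0 \<le> integral {\<alpha>+u..\<beta>+u} (\<lambda>v. a \<bullet> x v)"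
            using True ab by (intro Henstock_Kurzweil_Integration.integral_nonneg int_g[OF r sol] axnn) auto
          then show ?thesis using True by simp
        qed simp
      qed
      then show ?thesis using Vdiff[OF ab dV] by simp
    qed
    obtain K where K: "K > 0" "\<And>y. norm (A *v y) \<le> norm y * K"
      using bounded_linear.pos_bounded[OF matrix_vector_mul_bounded_linear[of A]] by blast
    define L where "L = 2 * K"
    have L: "L > 0" using K by (simp add: L_def)
    define dk where "dk k t = x t $ k * ((A *v Yv \<mu> r x t) $ k - x t \<bullet> (A *v Yv \<mu> r x t))" for k t
    have dkb: "\<bar>dk k t\<bar> \<le> L" if t: "t \<ge> 0" for k t
    proof -
      have nx: "norm (x v) \<le> 1" if "v \<ge> -r" for v using x_simplex[OF r sol that] by (rule norm_simplex)
      have nY: "norm (Yv \<mu> r x t) \<le> 1" using t by (intro norm_Y[OF r sol] nx) auto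
      have nG: "norm (A *v Yv \<mu> r x t) \<le> K"
        using K(2)[of "Yv \<mu> r x t"] nY K(1) by (meson mult_left_le_one_le order_trans less_imp_le norm_ge_zero)
      have c1: "\<bar>(A *v Yv \<mu> r x t) $ k\<bar> \<le> K" using component_le_norm_cart[of "A *v Yv \<mu> r x t" k] nG by linarith
      have c2: "\<bar>x t \<bullet> (A *v Yv \<mu> r x t)\<bar> \<le> K"
        using Cauchy_Schwarz_ineq2[of "x t" "A *v Yv \<mu> r x t"] nx[of t] nG t r
        by (smt (verit, ccfv_SIG) mult_left_le_one_le norm_ge_zero)
      have xk: "0 \<le> x t $ k" "x t $ k \<le> 1" using comp_nonneg[OF r sol, of t k] comp_le1[OF x_simplex[OF r sol], of t k] t r by auto
      have "\<bar>dk k t\<bar> = x t $ k * \<bar>(A *v Yv \<mu> r x t) $ k - x t \<bullet> (A *v Yv \<mu> r x t)\<bar>"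
        using xk by (simp add: dk_def abs_mult)
      also have "\<dots> \<le> 1 * (K + K)"
        using xk c1 c2 by (intro mult_mono) auto
      finally show ?thesis by (simp add: L_def)
    qed
    have lip: "\<bar>x t $ k - x s $ k\<bar> \<le> L * (t - s)" if st: "0 \<le> s" "s \<le> t" for s t k
    proof -
      have dx: "((\<lambda>\<tau>. x \<tau> $ k) has_real_derivative dk k \<tau>) (at \<tau> within {s..t})" if "\<tau> \<in> {s..t}" for \<tau>
        using that st unfolding dk_def by (intro DERIV_subset[OF comp_deriv[OF r sol]]) auto
      have "(\<lambda>\<tau>. L * \<tau> - x \<tau> $ k) s \<le> (\<lambda>\<tau>. L * \<tau> - x \<tau> $ k) t"
      proof (rule ftc_mono[OF st(2)])
        show "((\<lambda>\<tau>. L * \<tau> - x \<tau> $ k) has_real_derivative L * 1 - dk k \<tau>) (at \<tau> within {s..t})"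
          if "\<tau> \<in> {s..t}" for \<tau> by (intro DERIV_diff DERIV_cmult DERIV_ident dx that)
        show "0 \<le> L * 1 - dk k \<tau>" if "\<tau> \<in> {s..t}" for \<tau> using dkb[of \<tau> k] that st by auto
      qed
      moreover have "(\<lambda>\<tau>. L * \<tau> + x \<tau> $ k) s \<le> (\<lambda>\<tau>. L * \<tau> + x \<tau> $ k) t"
      proof (rule ftc_mono[OF st(2)])
        show "((\<lambda>\<tau>. L * \<tau> + x \<tau> $ k) has_real_derivative L * 1 + dk k \<tau>) (at \<tau> within {s..t})"
          if "\<tau> \<in> {s..t}" for \<tau> by (intro DERIV_add DERIV_cmult DERIV_ident dx that)
        show "0 \<le> L * 1 + dk k \<tau>" if "\<tau> \<in> {s..t}" for \<tau> using dkb[of \<tau> k] that st by auto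
      qed
      ultimately show ?thesis by (simp add: algebra_simps abs_le_iff)
    qed
    show ?thesis
    proof (rule ccontr)
      assume nt: "\<not> ?thesis"
      obtain \<epsilon> where e: "\<epsilon> > 0" and freq: "\<And>T. \<exists>t\<ge>T. \<epsilon> \<le> infdist (x t) simplex_boundary"
      proof -
        from nt obtain \<epsilon> where e: "\<epsilon> > 0" and ne: "\<not> (\<forall>\<^sub>F t in at_top. dist (infdist (x t) simplex_boundary) 0 < \<epsilon>)"
          unfolding tendsto_iff by blast
        have "\<exists>t\<ge>T. \<epsilon> \<le> infdist (x t) simplex_boundary" for T
          using ne unfolding eventually_at_top_linorder by (auto simp: not_less infdist_nonneg)
        then show ?thesis using that e by blast
      qed
      have good: "\<epsilon> / 2 \<le> x t $ k" if "t \<ge> 0" "\<epsilon> \<le> infdist (x t) simplex_boundary" for t k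
        using that r by (intro simplex_lb[OF x_simplex[OF r sol] e]) auto
      define Bv where "Bv = (\<Sum>i\<in>UNIV. \<bar>c $ i\<bar>) * \<bar>ln (\<epsilon> / 2)\<bar>"
      have Vle: "V t \<le> Bv" if t: "t \<ge> 0" "\<epsilon> \<le> infdist (x t) simplex_boundary" for t
      proof -
        have lnb: "\<bar>ln (x t $ k)\<bar> \<le> \<bar>ln (\<epsilon> / 2)\<bar>" for k
        proof -
          have a: "\<epsilon> / 2 \<le> x t $ k" using good[OF t] .
          have b: "x t $ k \<le> 1" using comp_le1[OF x_simplex[OF r sol], of t k] t r by simp
          have "ln (x t $ k) \<le> 0" using a b e by simp
          moreover have "ln (\<epsilon> / 2) \<le> ln (x t $ k)" using a e by simp
          moreover have "ln (\<epsilon> / 2) \<le> 0" using a b e by simp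
          ultimately show ?thesis by linarith
        qed
        have "V t \<le> (\<Sum>i\<in>UNIV. \<bar>c $ i\<bar> * \<bar>ln (\<epsilon> / 2)\<bar>)"
          unfolding V_def
        proof (rule sum_mono)
          fix i :: 'd
          have "c $ i * ln (x t $ i) \<le> \<bar>c $ i\<bar> * \<bar>ln (x t $ i)\<bar>" by (simp add: abs_mult[symmetric])
          also have "\<dots> \<le> \<bar>c $ i\<bar> * \<bar>ln (\<epsilon> / 2)\<bar>" by (intro mult_left_mono lnb) simp
          finally show "c $ i * ln (x t $ i) \<le> \<bar>c $ i\<bar> * \<bar>ln (\<epsilon> / 2)\<bar>" .
        qed
        then show ?thesis by (simp add: Bv_def sum_distrib_right)
      qed
      have Vbound: "V T \<le> Bv" if T: "T \<ge> 0" for T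
      proof -
        obtain t where t: "t \<ge> T" "\<epsilon> \<le> infdist (x t) simplex_boundary" using freq by blast
        then show ?thesis using Vmono[OF T t(1)] Vle[of t] T by force
      qed
      define sa where "sa = (\<Sum>k\<in>UNIV. a $ k)"
      have sa: "sa > 0"
      proof (rule ccontr)
        assume "\<not> sa > 0"
        moreover have "sa \<ge> 0" unfolding sa_def using a0 by (simp add: sum_nonneg)
        ultimately have "sa = 0" by simp
        then have "\<forall>k. a $ k = 0" unfolding sa_def using a0 by (simp add: sum_nonneg_eq_0_iff)
        then show False using an by (simp add: vec_eq_iff)
      qed
      define h where "h = \<epsilon> / (4 * L)"
      have h: "h > 0" using e L by (simp add: h_def)
      define \<kappa> where "\<kappa> = \<epsilon> / 4 * sa"
      have \<kappa>: "\<kappa> > 0" using e sa by (simp add: \<kappa>_def)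
      have incr: "V (t1 + r + h) \<ge> V (t1 - h) + 2 * h * \<kappa>"
        if t1: "t1 \<ge> h" "\<epsilon> \<le> infdist (x t1) simplex_boundary" for t1
      proof -
        have t10: "t1 \<ge> 0" using t1 h by simp
        have near: "a \<bullet> x v \<ge> \<kappa>" if v: "v \<in> {t1 - h..t1 + h}" for v
        proof -
          have xk: "x v $ k \<ge> \<epsilon> / 4" for k
          proof -
            have g: "\<epsilon> / 2 \<le> x t1 $ k" using good[OF t10 t1(2)] .
            have "\<bar>x v $ k - x t1 $ k\<bar> \<le> L * h"
            proof (cases "v \<le> t1")
              case True
              then have "\<bar>x t1 $ k - x v $ k\<bar> \<le> L * (t1 - v)" using v t1 by (intro lip) auto
              moreover have "L * (t1 - v) \<le> L * h" using v L by (intro mult_left_mono) auto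
              ultimately show ?thesis by (simp add: abs_minus_commute)
            next
              case False
              then have "\<bar>x v $ k - x t1 $ k\<bar> \<le> L * (v - t1)" using v t10 by (intro lip) auto
              moreover have "L * (v - t1) \<le> L * h" using v L by (intro mult_left_mono) auto
              ultimately show ?thesis by simp
            qed
            moreover have "L * h = \<epsilon> / 4" using L by (simp add: h_def)
            ultimately show ?thesis using g by linarith
          qed
          have "\<kappa> = (\<Sum>k\<in>UNIV. a $ k) * (\<epsilon> / 4)" by (simp add: \<kappa>_def sa_def)
          also have "\<dots> = (\<Sum>k\<in>UNIV. a $ k * (\<epsilon> / 4))" by (rule sum_distrib_right)
          also have "\<dots> \<le> (\<Sum>k\<in>UNIV. a $ k * x v $ k)"
            by (intro sum_mono mult_left_mono xk a0)
          also have "\<dots> = a \<bullet> x v" by (simp add: inner_vec_def)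
          finally show ?thesis .
        qed
        have ab: "0 \<le> t1 - h" "t1 - h \<le> t1 + r + h" using t1 h r by auto
        have "2 * h * \<kappa> \<le> (\<integral>u. indicator {-r..0} u * integral {t1 - h + u..t1 + r + h + u} (\<lambda>v. a \<bullet> x v) \<partial>\<mu>)"
        proof (rule integral_ge_const)
          show "integrable \<mu> (\<lambda>u. indicator {-r..0} u * integral {t1 - h + u..t1 + r + h + u} (\<lambda>v. a \<bullet> x v))"
            by (rule fub_inner(2)[OF r sol ab])
          have "AE u in \<mu>. u \<in> {-r..0}" using m1[OF r sol] by (intro AE_prob_1) simp
          then show "AE u in \<mu>. 2 * h * \<kappa> \<le> indicator {-r..0} u * integral {t1 - h + u..t1 + r + h + u} (\<lambda>v. a \<bullet> x v)"
          proof (rule AE_mp[OF _ AE_I2], intro impI)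
            fix u assume u: "u \<in> {-r..0}"
            have "2 * h * \<kappa> = integral {t1 - h..t1 + h} (\<lambda>v. \<kappa>)" using h by simp
            also have "\<dots> \<le> integral {t1 - h..t1 + h} (\<lambda>v. a \<bullet> x v)"
              using near ab r by (intro integral_le int_g[OF r sol]) auto
            also have "\<dots> \<le> integral {t1 - h + u..t1 + r + h + u} (\<lambda>v. a \<bullet> x v)"
              using u ab by (intro integral_subset_le int_g[OF r sol] ballI axnn) auto
            finally show "2 * h * \<kappa> \<le> indicator {-r..0} u * integral {t1 - h + u..t1 + r + h + u} (\<lambda>v. a \<bullet> x v)"
              using u by simp
          qed
        qed
        also have "\<dots> = V (t1 + r + h) - V (t1 - h)"
          using Vdiff[OF ab dV] by simp
        finally show ?thesis by simp
      qed
      have iter: "\<exists>T\<ge>0. V 0 + real n * (2 * h * \<kappa>) \<le> V T" for n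
      proof (induction n)
        case 0 then show ?case by auto
      next
        case (Suc n)
        then obtain T where T: "T \<ge> 0" "V 0 + real n * (2 * h * \<kappa>) \<le> V T" by blast
        obtain t1 where t1: "t1 \<ge> T + h" "\<epsilon> \<le> infdist (x t1) simplex_boundary" using freq by blast
        have "V T \<le> V (t1 - h)" using T t1 by (intro Vmono) auto
        moreover have "V (t1 + r + h) \<ge> V (t1 - h) + 2 * h * \<kappa>" using t1 T h by (intro incr) auto
        ultimately have "V 0 + real (Suc n) * (2 * h * \<kappa>) \<le> V (t1 + r + h)" using T by (simp add: algebra_simps)
        moreover have "t1 + r + h \<ge> 0" using t1 T h r by simp
        ultimately show ?case by blast
      qed
      obtain n where n: "Bv - V 0 < real n * (2 * h * \<kappa>)"
        using ex_less_of_nat_mult[of "2 * h * \<kappa>" "Bv - V 0"] h \<kappa> by auto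
      obtain T where T: "T \<ge> 0" "V 0 + real n * (2 * h * \<kappa>) \<le> V T" using iter by blast
      then show False using Vbound[OF T(1)] n by linarith
    qed
  qed
qed

end

lemma delayed_to_distributed:
  fixes A :: "real^'d^'d" and x :: "real \<Rightarrow> real^'d"
  assumes r: "r > 0" and d: "delayed_replicator_solution A r x"
  shows "distributed_replicator_solution A r (return borel (-r)) x"
proof -
  have cx: "continuous_on {-r..} x" and init: "\<forall>t\<in>{-r..0}. x t \<in> prob_simplex"
    and dx: "\<forall>t\<ge>0. (x has_vector_derivative rep_field A (x t) (x (t - r))) (at t within {0..})"
    using d by (auto simp: delayed_replicator_solution_def)
  have eq: "integral\<^sup>L (return borel (-r)) (\<lambda>s. indicator {-r..0} s *\<^sub>R x (t + s)) = x (t - r)"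
    if t: "t \<ge> 0" for t
  proof -
    have "continuous_on {-r..0} (\<lambda>s. x (t+s))"
      using t by (intro continuous_on_compose2[OF cx]) (auto intro!: continuous_intros)
    then have m: "(\<lambda>s. indicator {-r..0} s *\<^sub>R x (t+s)) \<in> borel_measurable borel"
      by (intro borel_measurable_continuous_on_indicator) auto
    have "integral\<^sup>L (return borel (-r)) (\<lambda>s. indicator {-r..0} s *\<^sub>R x (t + s)) = indicator {-r..0} (-r) *\<^sub>R x (t + - r)"
      by (rule integral_return[OF _ m]) simp
    then show ?thesis using r by simp
  qed
  show ?thesis
    unfolding distributed_replicator_solution_def
  proof (intro conjI)
    show "prob_space (return borel (-r))" by (rule prob_space_return) simp
    show "sets (return borel (-r)) = sets borel" by simp
    show "measure (return borel (-r)) {-r..0} = 1" using r by (simp add: measure_return)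
    show "continuous_on {-r..} x" by (rule cx)
    show "\<forall>t\<in>{-r..0}. x t \<in> prob_simplex" by (rule init)
    show "\<forall>t\<ge>0. (x has_vector_derivative rep_field A (x t) (integral\<^sup>L (return borel (-r)) (\<lambda>s. indicator {-r..0} s *\<^sub>R x (t + s)))) (at t within {0..})"
      using dx eq by simp
  qed
qed

theorem theorem2:
  fixes A :: "real^'d^'d" and r :: real and x :: "real \<Rightarrow> real^'d" and \<mu> :: "real measure"
  assumes "r > 0"
    and "delayed_replicator_solution A r x \<or> distributed_replicator_solution A r \<mu> x"
  shows "(\<not> (\<exists>p. interior_equilibrium A p) \<longrightarrow>
            ((\<lambda>t. infdist (x t) simplex_boundary) \<longlongrightarrow> 0) at_top)
       \<and> (\<forall>p. interior_equilibrium A p \<and> (\<forall>q. interior_equilibrium A q \<longrightarrow> q = p) \<longrightarrow>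
            (\<forall>t\<ge>0. x t \<in> simplex_interior) \<longrightarrow>
            (\<exists>\<delta>>0. \<forall>t\<ge>0. \<delta> \<le> infdist (x t) simplex_boundary) \<longrightarrow>
            (\<forall>i. ((\<lambda>T. integral {0..T} (\<lambda>t. x t $ i) / T) \<longlongrightarrow> p $ i) at_top))"
proof -
  obtain \<nu> where sol: "distributed_replicator_solution A r \<nu> x"
    using assms(2) delayed_to_distributed[OF assms(1)] by blast
  show ?thesis
  proof (intro conjI impI allI)
    assume "\<not> (\<exists>p. interior_equilibrium A p)"
    then show "((\<lambda>t. infdist (x t) simplex_boundary) \<longlongrightarrow> 0) at_top"
      by (rule part_a[OF assms(1) sol])
  next
    fix p i
    assume pq: "interior_equilibrium A p \<and> (\<forall>q. interior_equilibrium A q \<longrightarrow> q = p)"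
      and int: "\<forall>t\<ge>0. x t \<in> simplex_interior"
      and ex: "\<exists>\<delta>>0. \<forall>t\<ge>0. \<delta> \<le> infdist (x t) simplex_boundary"
    from ex obtain \<delta> where d: "\<delta> > 0" and dl: "\<forall>t\<ge>0. \<delta> \<le> infdist (x t) simplex_boundary" by blast
    show "((\<lambda>T. integral {0..T} (\<lambda>t. x t $ i) / T) \<longlongrightarrow> p $ i) at_top"
      using part_b[OF assms(1) sol conjunct1[OF pq] conjunct2[OF pq] int d dl] .
  qed
qed


end
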